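(* Let $a,b>0$ with $a+b=1/2$. Then $$\mathbf{B}'_{a,b}+\mathbf{B}'_{a,b}\;\stackrel{d}{=}\;\mathbf{B}'_{2a,2b}\times\left(\mathbf{B}_{a,1/2}+\mathbf{B}_{b,1/2}^{-1}\right),$$ where all random variables appearing on the same side of the identity are independent.
   Context: For $p,q>0$, $\mathbf{B}_{p,q}$ denotes a beta random variable with density $\frac{\Gamma(p+q)}{\Gamma(p)\Gamma(q)}x^{p-1}(1-x)^{q-1}$ on $(0,1)$, and $\mathbf{B}'_{p,q}$ a beta prime random variable with density $\frac{\Gamma(p+q)}{\Gamma(p)\Gamma(q)}\frac{x^{p-1}}{(1+x)^{p+q}}$ on $(0,\infty)$. $\stackrel{d}{=}$ denotes equality in distribution. *)

theory Defs
  imports "HOL-Probability.Probability"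
begin

definition beta_density :: "real \<Rightarrow> real \<Rightarrow> real \<Rightarrow> real" where
  "beta_density p q x =
     (if 0 < x \<and> x < 1
      then Gamma (p + q) / (Gamma p * Gamma q) * x powr (p - 1) * (1 - x) powr (q - 1)
      else 0)"

definition beta_prime_density :: "real \<Rightarrow> real \<Rightarrow> real \<Rightarrow> real" where
  "beta_prime_density p q x =
     (if 0 < x
      then Gamma (p + q) / (Gamma p * Gamma q) * x powr (p - 1) / (1 + x) powr (p + q)
      else 0)"

definition beta_measure :: "real \<Rightarrow> real \<Rightarrow> real measure" where
  "beta_measure p q = density lborel (\<lambda>x. ennreal (beta_density p q x))"

definition beta_prime_measure :: "real \<Rightarrow> real \<Rightarrow> real measure" where
  "beta_prime_measure p q = density lborel (\<lambda>x. ennreal (beta_prime_density p q x))"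

end

theory Submission
  imports Defs
begin

lemma Gamma_dup_real:
  fixes x :: real assumes "x > 0"
  shows "Gamma x * Gamma (x + 1/2) = 2 powr (1 - 2 * x) * sqrt pi * Gamma (2 * x)"
proof -
  have nz: "complex_of_real x \<notin> \<int>\<^sub>\<le>\<^sub>0" "complex_of_real x + 1/2 \<notin> \<int>\<^sub>\<le>\<^sub>0"
    using assms by (auto elim!: nonpos_Ints_cases simp: complex_eq_iff)
  have e1: "Gamma (complex_of_real (x+1/2)) = Gamma (complex_of_real x + 1/2)" by simp
  have e2: "Gamma (complex_of_real (2 * x)) = Gamma (2 * complex_of_real x)" by simp
  have "complex_of_real (Gamma x * Gamma (x + 1/2)) = Gamma (complex_of_real x) * Gamma (complex_of_real (x + 1/2))"
    by (simp only: of_real_mult Gamma_complex_of_real)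
  also have "\<dots> = exp ((1 - 2 * complex_of_real x) * of_real (ln 2)) * of_real (sqrt pi) * Gamma (2 * complex_of_real x)"
    using Gamma_legendre_duplication[OF nz] by (simp only: e1)
  also have "\<dots> = complex_of_real (exp ((1 - 2 * x) * ln 2) * sqrt pi * Gamma (2 * x))"
    by (simp only: of_real_mult Gamma_complex_of_real[symmetric] e2 exp_of_real[symmetric]) simp
  finally have "Gamma x * Gamma (x + 1/2) = exp ((1 - 2 * x) * ln 2) * sqrt pi * Gamma (2 * x)"
    using of_real_eq_iff by blast
  thus ?thesis by (simp add: powr_def)
qed

lemma const_id:
  fixes a b :: real assumes a: "a > 0" and b: "b > 0" and ab: "a + b = 1/2"
  shows "1 / (Gamma (2 * a) * Gamma (2 * b)) * (Gamma (a + 1/2) / (Gamma a * Gamma (1/2)))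
          * (Gamma (b + 1/2) / (Gamma b * Gamma (1/2))) * pi
        = 2 * (Gamma (1/2) / (Gamma a * Gamma b))^2"
proof -
  have da: "Gamma a * Gamma (a + 1/2) = 2 powr (1 - 2 * a) * sqrt pi * Gamma (2 * a)" using Gamma_dup_real a by blast
  have db: "Gamma b * Gamma (b + 1/2) = 2 powr (1 - 2 * b) * sqrt pi * Gamma (2 * b)" using Gamma_dup_real b by blast
  have p2: "2 powr (1 - 2 * a) * 2 powr (1 - 2 * b) = (2::real)"
    by (simp add: powr_add[symmetric]) (use ab in \<open>simp add: algebra_simps\<close>)
  have pos: "Gamma a > 0" "Gamma b > 0" "Gamma (2 * a) > 0" "Gamma (2 * b) > 0"
    using a b by auto
  have sp: "sqrt pi * sqrt pi = pi" by simp
  have H: "Gamma (a + 1/2) * Gamma (b + 1/2) * (Gamma a * Gamma b) = (2 powr (1 - 2 * a) * sqrt pi * Gamma (2 * a)) * (2 powr (1 - 2 * b) * sqrt pi * Gamma (2 * b))"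
    by (simp only: da[symmetric] db[symmetric]) (simp add: ac_simps)
  have "Gamma (a + 1/2) * Gamma (b + 1/2) = (2 powr (1 - 2 * a) * sqrt pi * Gamma (2 * a)) * (2 powr (1 - 2 * b) * sqrt pi * Gamma (2 * b)) / (Gamma a * Gamma b)"
    using pos H by (simp add: eq_divide_eq)
  also have "\<dots> = (2 powr (1 - 2 * a) * 2 powr (1 - 2 * b)) * (sqrt pi * sqrt pi) * Gamma (2 * a) * Gamma (2 * b) / (Gamma a * Gamma b)"
    by (simp only: mult_ac)
  also have "\<dots> = 2 * pi * Gamma (2 * a) * Gamma (2 * b) / (Gamma a * Gamma b)"
    by (simp only: p2 sp)
  finally have G: "Gamma (a + 1/2) * Gamma (b + 1/2) = 2 * pi * Gamma (2 * a) * Gamma (2 * b) / (Gamma a * Gamma b)" .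
  have "1 / (Gamma (2 * a) * Gamma (2 * b)) * (Gamma (a + 1/2) / (Gamma a * Gamma (1/2)))
          * (Gamma (b + 1/2) / (Gamma b * Gamma (1/2))) * pi
        = (Gamma (a + 1/2) * Gamma (b + 1/2)) * pi / (Gamma (2 * a) * Gamma (2 * b) * (Gamma a * Gamma b) * (Gamma (1/2) * Gamma (1/2)))"
    by (simp add: field_simps)
  also have "\<dots> = (Gamma (a + 1/2) * Gamma (b + 1/2)) * pi / (Gamma (2 * a) * Gamma (2 * b) * (Gamma a * Gamma b) * (sqrt pi * sqrt pi))"
    by (simp only: Gamma_one_half_real)
  also have "\<dots> = (2 * pi * Gamma (2 * a) * Gamma (2 * b) / (Gamma a * Gamma b)) * pi / (Gamma (2 * a) * Gamma (2 * b) * (Gamma a * Gamma b) * (sqrt pi * sqrt pi))"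
    by (simp only: G)
  also have "\<dots> = 2 * (Gamma (1/2) / (Gamma a * Gamma b))^2"
    using pos by (simp add: Gamma_one_half_real field_simps power2_eq_square)
  finally show ?thesis .
qed

lemma pt_identity:
  fixes a b u v z :: real assumes a: "a > 0" and b: "b > 0" and ab: "a + b = 1/2"
    and u: "0 < u" and uz: "u < z * v" and z0: "0 < z" and z1: "z < 1"
  shows "(z * v) powr (2 * a-1) * (u/(z * v)) powr (a-1) * (1 - u/(z * v)) powr (1/2-1) * z powr (b-1) * (1-z) powr (1/2-1) / v
       = u powr (a-1) * v powr (-b) / sqrt((1-z) * (z * v-u))"
proof -
  have v: "v > 0" using u uz z0 by (smt (verit) mult_nonpos_nonneg zero_less_mult_iff)
  have zv: "z * v > 0" using u uz by linarith
  have bb: "b = 1/2 - a" using ab by simp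
  have e: "1 - u/(z * v) = (z * v-u)/(z * v)" using zv z0 v by (simp add: diff_divide_distrib)
  have q: "z * v - u > 0" "1 - z > 0" using uz z1 by auto
  have L: "0 < (z * v) powr (2 * a-1) * (u/(z * v)) powr (a-1) * ((z * v-u)/(z * v)) powr (1/2-1) * z powr (b-1) * (1-z) powr (1/2-1) / v"
    using zv q u v z0 by (intro mult_pos_pos divide_pos_pos) auto
  have R: "0 < u powr (a-1) * v powr (-b) / sqrt((1-z) * (z * v-u))"
    using q u v by (intro mult_pos_pos divide_pos_pos) auto
  have "ln ((z * v) powr (2 * a-1) * (u/(z * v)) powr (a-1) * ((z * v-u)/(z * v)) powr (1/2-1) * z powr (b-1) * (1-z) powr (1/2-1) / v)
      = (2 * a-1) * (ln z + ln v) + (a-1) * (ln u - ln z - ln v) + (1/2-1) * (ln (z * v-u) - ln z - ln v) + (b-1) * ln z + (1/2-1) * ln (1-z) - ln v"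
    using zv q u v z0 by (simp add: ln_mult ln_div ln_powr; simp add: algebra_simps)
  also have "\<dots> = (a-1) * ln u + (-b) * ln v - (ln (1-z) + ln (z * v-u))/2"
    unfolding bb by (simp add: algebra_simps add_divide_distrib)
  also have "\<dots> = ln (u powr (a-1) * v powr (-b) / sqrt((1-z) * (z * v-u)))"
    using zv q u v z0 by (simp add: ln_mult ln_div ln_powr ln_sqrt)
  finally show ?thesis unfolding e using L R by simp
qed


lemma field_aux:
  fixes P sA sv sq d w :: real assumes "sA > 0" "sv > 0" "sq > 0" "d \<noteq> 0" "w \<noteq> 0"
  shows "P / (sv * sA) * (inverse (2 * sA * sv * sq / (d * w)) * (2 * (sA * sA) * (sv * sv) / (d * w^2))) = P / (sq * w)"
  using assms by (simp add: field_simps power2_eq_square)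

lemma kernel_has_integral:
  fixes a b u v :: real assumes a: "a > 0" and b: "b > 0" and ab: "a + b = 1/2"
    and u: "0 < u" and uv: "u < v"
  shows "((\<lambda>z. beta_prime_density (2 * a) (2 * b) (z * v) * beta_density a (1/2) (u/(z * v))
              * beta_density b (1/2) z / v)
          has_integral (2 * beta_prime_density a b u * beta_prime_density a b v)) {u/v..1}"
proof -
  define KK where "KK = 1 / (Gamma (2 * a) * Gamma (2 * b)) * (Gamma (a + 1/2) / (Gamma a * Gamma (1/2)))
          * (Gamma (b + 1/2) / (Gamma b * Gamma (1/2)))"
  define A where "A = 1 + u"
  define B where "B = 1 + v"
  define g where "g = (\<lambda>z. ((A+B) * (1 + z * v) - 2 * A * B)/((v-u) * (1 + z * v)))"
  define g' where "g' = (\<lambda>z. 2 * A * B * v/((v-u) * (1 + z * v)^2))"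
  define M where "M = KK * u powr (a-1) * v powr (-b) / (sqrt v * sqrt (A * B))"
  define F where "F = (\<lambda>z. M * arcsin (g z))"
  define k where "k = (\<lambda>z. beta_prime_density (2 * a) (2 * b) (z * v) * beta_density a (1/2) (u/(z * v))
              * beta_density b (1/2) z / v)"
  have v: "v > 0" using u uv by linarith
  have A: "A > 0" and B: "B > 0" unfolding A_def B_def using u v by auto
  have uv1: "0 < u/v" "u/v < 1" using u v uv by auto
  have wpos: "1 + z * v > 0" if "u/v \<le> z" for z
  proof -
    have "u \<le> z * v" using that v by (simp add: divide_le_eq)
    thus ?thesis using u by linarith
  qed
  have om: "1 - (g z)^2 = 4 * A * B * (v * (1-z)) * (z * v-u)/((v-u) * (1 + z * v))^2" if "u/v \<le> z" for z
  proof -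
    have "1 + z * v \<noteq> 0" "v - u \<noteq> 0" using wpos[OF that] uv by auto
    thus ?thesis unfolding g_def A_def B_def
      by (simp add: divide_simps power2_eq_square; algebra)
  qed
  have gle: "-1 \<le> g z \<and> g z \<le> 1" if "u/v \<le> z" "z \<le> 1" for z
  proof -
    have "u \<le> z * v" using that v by (simp add: divide_le_eq)
    hence "0 \<le> 4 * A * B * (v * (1-z)) * (z * v-u)/((v-u) * (1 + z * v))^2"
      using A B v that by (intro divide_nonneg_nonneg mult_nonneg_nonneg) auto
    hence "(g z)^2 \<le> 1" using om[OF that(1)] by linarith
    thus ?thesis using abs_square_le_1 by (metis abs_le_iff minus_le_iff)
  qed
  have glt: "-1 < g z \<and> g z < 1" if "u/v < z" "z < 1" for z
  proof -
    have "u < z * v" using that v by (simp add: divide_less_eq)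
    hence "0 < 4 * A * B * (v * (1-z)) * (z * v-u)/((v-u) * (1 + z * v))^2"
      using A B v that uv wpos[of z] by (intro divide_pos_pos mult_pos_pos) auto
    hence "(g z)^2 < 1" using om[of z] that by linarith
    thus ?thesis using abs_square_less_1 by (metis abs_less_iff minus_less_iff)
  qed
  have nz1: "v + v * v \<noteq> u + u * v"
  proof -
    have "(v-u) * (1+v) > 0" using uv v by (intro mult_pos_pos) auto
    thus ?thesis by (simp add: algebra_simps)
  qed
  have g1: "g 1 = 1" unfolding g_def A_def B_def using uv nz1 by (simp add: field_simps)
  have nz0: "v + u * v - (u + u * u) \<noteq> 0"
  proof -
    have "(v-u) * (1+u) > 0" using uv u by (intro mult_pos_pos) auto
    thus ?thesis by (simp add: algebra_simps)
  qed
  have g0': "(u + u * u - (v + u * v)) / (v + u * v - (u + u * u)) = -1"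
  proof -
    have "u + u * u - (v + u * v) = - (v + u * v - (u + u * u))" by simp
    thus ?thesis using nz0 by (simp only: divide_minus_left) simp
  qed
  have g0: "g (u/v) = -1" unfolding g_def A_def B_def using uv v g0' by (simp add: field_simps)
  have w0: "1 + x * v \<noteq> 0" if "u/v \<le> x" for x using wpos[OF that] by linarith
  have contF: "continuous_on {u/v..1} F"
    unfolding F_def g_def
    apply (intro continuous_intros)
    using w0 uv apply force
    using gle unfolding g_def by auto
  have derF: "(F has_vector_derivative k z) (at z)" if z: "z \<in> {u/v<..<1}" for z
  proof -
    have z1: "u/v < z" "z < 1" using z by auto
    have zv: "u < z * v" using z1 v by (simp add: divide_less_eq)
    have z0: "0 < z" using uv1 z1 by linarith
    have w: "1 + z * v > 0" using wpos z1 by auto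
    have dg: "(g has_real_derivative g' z) (at z)"
      unfolding g_def g'_def
      apply (rule derivative_eq_intros refl | use w uv in force)+
      using w uv by (simp add: divide_simps power2_eq_square; algebra)
    have dF: "(F has_real_derivative M * (inverse (sqrt (1 - (g z)^2)) * g' z)) (at z)"
      unfolding F_def
      by (intro DERIV_cmult DERIV_chain2[OF DERIV_arcsin dg]) (use glt[OF z1] in auto)
    define sA where "sA = sqrt (A * B)"
    define sv where "sv = sqrt v"
    define sq where "sq = sqrt ((1-z) * (z * v-u))"
    have sA: "sA > 0" "sA * sA = A * B" unfolding sA_def using A B by auto
    have sv: "sv > 0" "sv * sv = v" unfolding sv_def using v by auto
    have sq: "sq > 0" unfolding sq_def using zv z1 by auto
    have "sqrt (1 - (g z)^2) = sqrt ((2 * sA * sv * sq/((v-u) * (1 + z * v)))^2)"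
    proof -
      have "(2 * sA * sv * sq/((v-u) * (1 + z * v)))^2 = 4 * (sA * sA) * (sv * sv) * (sq * sq)/((v-u) * (1 + z * v))^2"
        by (simp add: power2_eq_square)
      also have "sq * sq = (1-z) * (z * v-u)" unfolding sq_def using zv z1 by simp
      finally show ?thesis using om[of z] z1 sA sv by (simp add: algebra_simps)
    qed
    also have "\<dots> = 2 * sA * sv * sq/((v-u) * (1 + z * v))"
      using sA sv sq uv w by simp
    finally have sqe: "sqrt (1 - (g z)^2) = 2 * sA * sv * sq/((v-u) * (1 + z * v))" .
    have kz: "k z = KK * (u powr (a-1) * v powr (-b) / sq) / (1 + z * v)"
    proof -
      have zv0: "z * v > 0" using zv u by linarith
      have y: "0 < u/(z * v)" "u/(z * v) < 1" using zv0 zv u by (auto simp: divide_less_eq)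
      have e2: "2 * a + 2 * b = 1" using ab by simp
      have "k z = KK * ((z * v) powr (2 * a-1) * (u/(z * v)) powr (a-1) * (1 - u/(z * v)) powr (1/2-1) * z powr (b-1) * (1-z) powr (1/2-1) / v) / (1 + z * v)"
        unfolding k_def beta_prime_density_def beta_density_def KK_def
        using zv0 y z0 z1 by (simp add: e2; simp only: mult_ac)
      also have "\<dots> = KK * (u powr (a-1) * v powr (-b) / sq) / (1 + z * v)"
        unfolding sq_def using pt_identity[OF a b ab u zv z0 z1(2)] by simp
      finally show ?thesis .
    qed
    define P where "P = KK * u powr (a-1) * v powr (-b)"
    have g'z: "g' z = 2 * (sA * sA) * (sv * sv) / ((v-u) * (1 + z * v)^2)"
      unfolding g'_def by (simp only: sA(2) sv(2) mult.assoc)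
    have Mz: "M = P / (sv * sA)" unfolding M_def P_def sv_def sA_def by simp
    have kz': "k z = P / (sq * (1 + z * v))" unfolding kz P_def by simp
    have "M * (inverse (sqrt (1 - (g z)^2)) * g' z) = k z"
      unfolding kz' sqe Mz g'z
      by (rule field_aux) (use sA sv sq uv w in auto)
    with dF show ?thesis by (simp add: has_real_derivative_iff_has_vector_derivative)
  qed
  have I: "(k has_integral (F 1 - F (u/v))) {u/v..1}"
    using fundamental_theorem_of_calculus_interior[OF _ contF derF] uv1 by simp
  have "F 1 - F (u/v) = M * pi" unfolding F_def g1 g0 by (simp add: algebra_simps)
  also have "\<dots> = 2 * beta_prime_density a b u * beta_prime_density a b v"
  proof -
    have c: "KK * pi = 2 * (Gamma (1/2) / (Gamma a * Gamma b))^2"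
      unfolding KK_def using const_id[OF a b ab] by simp
    have vp: "v powr (-b) = v powr (a-1) * sqrt v"
    proof -
      have "-b = (a-1) + 1/2" using ab by simp
      hence "v powr (-b) = v powr ((a-1) + 1/2)" by (simp only:)
      also have "\<dots> = v powr (a-1) * v powr (1/2)" by (rule powr_add)
      also have "\<dots> = v powr (a-1) * sqrt v" using v by (simp only: powr_half_sqrt less_imp_le)
      finally show ?thesis .
    qed
    have "M * pi = (KK * pi) * u powr (a-1) * v powr (a-1) / (sqrt A * sqrt B)"
      unfolding M_def vp using v A B by (simp add: real_sqrt_mult field_simps)
    also have "\<dots> = 2 * beta_prime_density a b u * beta_prime_density a b v"
      unfolding c beta_prime_density_def A_def B_def ab using u v
      by (simp add: powr_half_sqrt power2_eq_square field_simps)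
    finally show ?thesis .
  qed
  finally show ?thesis using I unfolding k_def by simp
qed



lemma beta_density_borel: "beta_density p q \<in> borel_measurable borel"
  unfolding beta_density_def[abs_def] by measurable

lemma beta_prime_density_borel: "beta_prime_density p q \<in> borel_measurable borel"
  unfolding beta_prime_density_def[abs_def] by measurable

lemma beta_density_borel_comp[measurable]:
  "f \<in> borel_measurable M \<Longrightarrow> (\<lambda>x. beta_density p q (f x)) \<in> borel_measurable M"
  using measurable_compose[OF _ beta_density_borel] by blast

lemma beta_prime_density_borel_comp[measurable]:
  "f \<in> borel_measurable M \<Longrightarrow> (\<lambda>x. beta_prime_density p q (f x)) \<in> borel_measurable M"
  using measurable_compose[OF _ beta_prime_density_borel] by blast

lemma beta_density_nonneg: "p > 0 \<Longrightarrow> q > 0 \<Longrightarrow> 0 \<le> beta_density p q x"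
  unfolding beta_density_def by auto

lemma beta_prime_density_nonneg: "p > 0 \<Longrightarrow> q > 0 \<Longrightarrow> 0 \<le> beta_prime_density p q x"
  unfolding beta_prime_density_def by auto

lemma beta_density_zero: "\<not> (0 < x \<and> x < 1) \<Longrightarrow> beta_density p q x = 0"
  unfolding beta_density_def by auto

lemma beta_prime_density_zero: "x \<le> 0 \<Longrightarrow> beta_prime_density p q x = 0"
  unfolding beta_prime_density_def by auto

definition kf :: "real \<Rightarrow> real \<Rightarrow> real \<Rightarrow> real \<Rightarrow> real \<Rightarrow> real" where
  "kf a b u v z = beta_prime_density (2*a) (2*b) (z * v) * beta_density a (1/2) (u/(z * v))
              * beta_density b (1/2) z / v"

lemma kf_borel[measurable]: "kf a b u v \<in> borel_measurable borel"
  unfolding kf_def[abs_def] by measurable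

lemma kf_nonneg:
  fixes a b :: real assumes a: "a > 0" and b: "b > 0"
  shows "0 \<le> kf a b u v z"
proof (cases "v > 0")
  case True
  then show ?thesis unfolding kf_def using a b
    by (intro divide_nonneg_pos mult_nonneg_nonneg beta_density_nonneg beta_prime_density_nonneg) auto
next
  case False
  show ?thesis
  proof (cases "0 < z \<and> z < 1")
    case True
    with False have "z * v \<le> 0" by (simp add: mult_nonneg_nonpos)
    then show ?thesis unfolding kf_def by (simp add: beta_prime_density_zero)
  next
    case False
    then show ?thesis unfolding kf_def by (simp add: beta_density_zero)
  qed
qed

lemma kf_zero:
  fixes a b :: real
  assumes "\<not> (0 < u \<and> u < v) \<or> \<not> (u/v \<le> z \<and> z \<le> 1)"
  shows "kf a b u v z = 0"
proof (cases "0 < z \<and> z < 1")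
  case False
  then show ?thesis unfolding kf_def by (simp add: beta_density_zero[OF False])
next
  case z: True
  show ?thesis
  proof (cases "0 < z * v")
    case False
    then show ?thesis unfolding kf_def by (simp add: beta_prime_density_zero)
  next
    case zv: True
    show ?thesis
    proof (cases "0 < u / (z * v) \<and> u / (z * v) < 1")
      case False
      then show ?thesis unfolding kf_def by (simp add: beta_density_zero[OF False])
    next
      case y: True
      have v: "v > 0" using z zv by (simp add: zero_less_mult_iff)
      have u: "0 < u" using y zv by (simp add: zero_less_divide_iff)
      have uzv: "u < z * v" using y zv by (simp add: divide_less_eq)
      have "z * v < 1 * v" using z v by (intro mult_strict_right_mono) auto
      hence "u < v" using uzv by simp
      moreover have "u / v \<le> z" using uzv v by (simp add: pos_divide_le_eq)
      ultimately have False using assms u z by auto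
      then show ?thesis ..
    qed
  qed
qed

lemma kernel_nn:
  fixes a b :: real assumes a: "a > 0" and b: "b > 0" and ab: "a + b = 1/2"
  shows "(\<integral>\<^sup>+z. ennreal (kf a b u v z) \<partial>lborel)
        = ennreal (if 0 < u \<and> u < v then 2 * beta_prime_density a b u * beta_prime_density a b v else 0)"
proof (cases "0 < u \<and> u < v")
  case True
  hence u: "0 < u" and uv: "u < v" by auto
  have eq: "kf a b u v z = (if z \<in> {u/v..1} then kf a b u v z else 0)" for z
    using kf_zero[of u v z a b] by auto
  have I: "(kf a b u v has_integral (2 * beta_prime_density a b u * beta_prime_density a b v)) {u/v..1}"
    using kernel_has_integral[OF a b ab u uv] unfolding kf_def[abs_def] .
  have "(kf a b u v has_integral (2 * beta_prime_density a b u * beta_prime_density a b v)) UNIV"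
    by (subst eq[abs_def]) (use I in \<open>simp only: has_integral_restrict_UNIV\<close>)
  then have "integral\<^sup>N lborel (kf a b u v) = 2 * beta_prime_density a b u * beta_prime_density a b v"
    by (intro nn_integral_has_integral_lborel kf_borel kf_nonneg[OF a b])
  then show ?thesis using True by simp
next
  case False
  then have "kf a b u v z = 0" for z using kf_zero by blast
  then show ?thesis using False by (simp add: if_not_P[OF False])
qed


lemma sigma_finite_density_real:
  fixes f :: "real \<Rightarrow> real" assumes "f \<in> borel_measurable borel"
  shows "sigma_finite_measure (density lborel (\<lambda>x. ennreal (f x)))"
  using assms by (subst sigma_finite_measure.sigma_finite_iff_density_finite[OF sigma_finite_lborel]) auto

lemma nn_integral_density_prod:
  fixes f :: "real \<Rightarrow> real" assumes f[measurable]: "f \<in> borel_measurable borel"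
  and M2: "sigma_finite_measure M2"
  and h[measurable]: "h \<in> borel_measurable (lborel \<Otimes>\<^sub>M M2)"
  shows "(\<integral>\<^sup>+p. h p \<partial>(density lborel (\<lambda>x. ennreal (f x)) \<Otimes>\<^sub>M M2))
       = (\<integral>\<^sup>+x. ennreal (f x) * (\<integral>\<^sup>+y. h (x,y) \<partial>M2) \<partial>lborel)"
proof -
  interpret M2: sigma_finite_measure M2 by fact
  have hm: "h \<in> borel_measurable (density lborel (\<lambda>x. ennreal (f x)) \<Otimes>\<^sub>M M2)"
    using h by (subst measurable_cong_sets[OF sets_pair_measure_cong[OF sets_density refl] refl])
  have "(\<integral>\<^sup>+p. h p \<partial>(density lborel (\<lambda>x. ennreal (f x)) \<Otimes>\<^sub>M M2))
      = (\<integral>\<^sup>+x. (\<integral>\<^sup>+y. h (x,y) \<partial>M2) \<partial>density lborel (\<lambda>x. ennreal (f x)))"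
    using M2.nn_integral_fst[OF hm] by simp
  also have "\<dots> = (\<integral>\<^sup>+x. ennreal (f x) * (\<integral>\<^sup>+y. h (x,y) \<partial>M2) \<partial>lborel)"
    using M2.borel_measurable_nn_integral_fst[OF h]
    by (intro nn_integral_density) auto
  finally show ?thesis .
qed

lemma lhs_eq:
  fixes a b :: real and A :: "real set" assumes A[measurable]: "A \<in> sets borel"
  shows "emeasure (distr (beta_prime_measure a b \<Otimes>\<^sub>M beta_prime_measure a b) borel (\<lambda>(x, y). x + y)) A
    = (\<integral>\<^sup>+x. \<integral>\<^sup>+y. ennreal (beta_prime_density a b x) * ennreal (beta_prime_density a b y)
          * indicator A (x + y) \<partial>lborel \<partial>lborel)"
proof -
  let ?M = "beta_prime_measure a b"
  have sf: "sigma_finite_measure ?M" unfolding beta_prime_measure_def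
    by (rule sigma_finite_density_real) measurable
  have "emeasure (distr (?M \<Otimes>\<^sub>M ?M) borel (\<lambda>(x, y). x + y)) A
      = (\<integral>\<^sup>+p. indicator A p \<partial>distr (?M \<Otimes>\<^sub>M ?M) borel (\<lambda>(x, y). x + y))"
    by simp
  also have "\<dots> = (\<integral>\<^sup>+p. indicator A (case p of (x, y) \<Rightarrow> x + y) \<partial>(?M \<Otimes>\<^sub>M ?M))"
    unfolding beta_prime_measure_def by (intro nn_integral_distr) measurable
  also have "\<dots> = (\<integral>\<^sup>+x. ennreal (beta_prime_density a b x) *
       (\<integral>\<^sup>+y. indicator A (x + y) \<partial>?M) \<partial>lborel)"
    unfolding beta_prime_measure_def[of a b]
    apply (subst nn_integral_density_prod)
    using sf unfolding beta_prime_measure_def by (auto simp: split_beta')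
  also have "\<dots> = (\<integral>\<^sup>+x. \<integral>\<^sup>+y. ennreal (beta_prime_density a b x) * ennreal (beta_prime_density a b y)
          * indicator A (x + y) \<partial>lborel \<partial>lborel)"
    unfolding beta_prime_measure_def
    by (intro nn_integral_cong, subst nn_integral_density, measurable,
        subst nn_integral_cmult[symmetric], measurable) (simp add: mult.assoc)
  finally show ?thesis .
qed

lemma rhs_eq:
  fixes a b :: real and A :: "real set" assumes A[measurable]: "A \<in> sets borel"
  shows "emeasure (distr (beta_prime_measure (2 * a) (2 * b) \<Otimes>\<^sub>M
                  (beta_measure a (1 / 2) \<Otimes>\<^sub>M beta_measure b (1 / 2))) borel
            (\<lambda>(x, y, z). x * (y + 1 / z))) A
    = (\<integral>\<^sup>+x. \<integral>\<^sup>+y. \<integral>\<^sup>+z. ennreal (beta_prime_density (2*a) (2*b) x) * ennreal (beta_density a (1/2) y)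
          * ennreal (beta_density b (1/2) z) * indicator A (x * (y + 1 / z)) \<partial>lborel \<partial>lborel \<partial>lborel)"
proof -
  let ?N = "beta_prime_measure (2 * a) (2 * b)"
  let ?P = "beta_measure a (1 / 2)"
  let ?Q = "beta_measure b (1 / 2)"
  have sfP: "sigma_finite_measure ?P" unfolding beta_measure_def
    by (rule sigma_finite_density_real) measurable
  have sfQ: "sigma_finite_measure ?Q" unfolding beta_measure_def
    by (rule sigma_finite_density_real) measurable
  have sfPQ: "sigma_finite_measure (?P \<Otimes>\<^sub>M ?Q)" by (rule sigma_finite_pair_measure[OF sfP sfQ])
  have "emeasure (distr (?N \<Otimes>\<^sub>M (?P \<Otimes>\<^sub>M ?Q)) borel (\<lambda>(x, y, z). x * (y + 1 / z))) A
      = (\<integral>\<^sup>+p. indicator A p \<partial>distr (?N \<Otimes>\<^sub>M (?P \<Otimes>\<^sub>M ?Q)) borel (\<lambda>(x, y, z). x * (y + 1 / z)))"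
    by simp
  also have "\<dots> = (\<integral>\<^sup>+p. indicator A (case p of (x, y, z) \<Rightarrow> x * (y + 1 / z)) \<partial>(?N \<Otimes>\<^sub>M (?P \<Otimes>\<^sub>M ?Q)))"
    unfolding beta_prime_measure_def beta_measure_def by (intro nn_integral_distr) measurable
  also have "\<dots> = (\<integral>\<^sup>+x. ennreal (beta_prime_density (2*a) (2*b) x) *
       (\<integral>\<^sup>+q. indicator A (x * (fst q + 1 / snd q)) \<partial>(?P \<Otimes>\<^sub>M ?Q)) \<partial>lborel)"
    unfolding beta_prime_measure_def[of "2*a"]
    apply (subst nn_integral_density_prod)
    using sfPQ unfolding beta_measure_def by (auto simp: split_beta')
  also have "\<dots> = (\<integral>\<^sup>+x. ennreal (beta_prime_density (2*a) (2*b) x) *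
       (\<integral>\<^sup>+y. ennreal (beta_density a (1/2) y) * (\<integral>\<^sup>+z. indicator A (x * (y + 1 / z)) \<partial>?Q) \<partial>lborel) \<partial>lborel)"
    apply (intro nn_integral_cong arg_cong2[where f="(*)"] refl)
    unfolding beta_measure_def[of a]
    apply (subst nn_integral_density_prod)
    using sfQ unfolding beta_measure_def by auto
  also have "\<dots> = (\<integral>\<^sup>+x. \<integral>\<^sup>+y. \<integral>\<^sup>+z. ennreal (beta_prime_density (2*a) (2*b) x) * ennreal (beta_density a (1/2) y)
          * ennreal (beta_density b (1/2) z) * indicator A (x * (y + 1 / z)) \<partial>lborel \<partial>lborel \<partial>lborel)"
    unfolding beta_measure_def
    apply (intro nn_integral_cong arg_cong2[where f="(*)"] refl)
    apply (subst nn_integral_density, measurable)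
    apply (subst nn_integral_cmult[symmetric], measurable)
    apply (intro nn_integral_cong)
    apply (subst nn_integral_cmult[symmetric], measurable)+
    by (simp add: mult.assoc)
  finally show ?thesis .
qed


lemma swap2:
  "case_prod f \<in> borel_measurable (lborel \<Otimes>\<^sub>M lborel) \<Longrightarrow>
   (\<integral>\<^sup>+y. \<integral>\<^sup>+x. f x y \<partial>lborel \<partial>lborel) = (\<integral>\<^sup>+x. \<integral>\<^sup>+y. f x y \<partial>lborel \<partial>lborel)"
  by (rule lborel_pair.Fubini')

context
  fixes a b :: real and A :: "real set"
  assumes a: "a > 0" and b: "b > 0" and ab: "a + b = 1/2" and A[measurable]: "A \<in> sets borel"
begin

lemma step2:
  "(\<integral>\<^sup>+y. ennreal (beta_prime_density (2*a) (2*b) x) * ennreal (beta_density a (1/2) y)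
          * ennreal (beta_density b (1/2) z) * indicator A (x * (y + 1 / z)) \<partial>lborel)
 = (\<integral>\<^sup>+u. ennreal (beta_prime_density (2*a) (2*b) x) * ennreal (beta_density a (1/2) (u / x) / x)
          * ennreal (beta_density b (1/2) z) * indicator A (u + x / z) \<partial>lborel)"
proof (cases "x > 0")
  case True
  define F where "F = (\<lambda>y. ennreal (beta_prime_density (2*a) (2*b) x) * ennreal (beta_density a (1/2) y)
          * ennreal (beta_density b (1/2) z) * indicator A (x * (y + 1 / z)))"
  have Fm: "F \<in> borel_measurable borel" unfolding F_def by measurable
  have "integral\<^sup>N lborel F = ennreal \<bar>1/x\<bar> * (\<integral>\<^sup>+u. F (0 + 1/x * u) \<partial>lborel)"
    using True by (intro nn_integral_real_affine[OF Fm]) simp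
  hence "(\<integral>\<^sup>+y. ennreal (beta_prime_density (2*a) (2*b) x) * ennreal (beta_density a (1/2) y)
          * ennreal (beta_density b (1/2) z) * indicator A (x * (y + 1 / z)) \<partial>lborel)
      = ennreal \<bar>1/x\<bar> * (\<integral>\<^sup>+u. ennreal (beta_prime_density (2*a) (2*b) x) * ennreal (beta_density a (1/2) (0 + 1/x * u))
          * ennreal (beta_density b (1/2) z) * indicator A (x * ((0 + 1/x * u) + 1 / z)) \<partial>lborel)"
    unfolding F_def .
  also have "\<dots> = (\<integral>\<^sup>+u. ennreal \<bar>1/x\<bar> * (ennreal (beta_prime_density (2*a) (2*b) x) * ennreal (beta_density a (1/2) (0 + 1/x * u))
          * ennreal (beta_density b (1/2) z) * indicator A (x * ((0 + 1/x * u) + 1 / z))) \<partial>lborel)"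
    by (rule nn_integral_cmult[symmetric]) measurable
  also have "\<dots> = (\<integral>\<^sup>+u. ennreal (beta_prime_density (2*a) (2*b) x) * ennreal (beta_density a (1/2) (u / x) / x)
          * ennreal (beta_density b (1/2) z) * indicator A (u + x / z) \<partial>lborel)"
  proof (intro nn_integral_cong)
    fix u :: real
    have e1: "x * (u / x + 1 / z) = u + x / z" using True by (simp add: field_simps)
    have e0: "0 + 1/x * u = u / x" by simp
    have e2: "ennreal (beta_density a (1/2) (u / x) / x) = ennreal \<bar>1/x\<bar> * ennreal (beta_density a (1/2) (u / x))"
    proof -
      have "ennreal (beta_density a (1/2) (u / x) / x) = ennreal (\<bar>1/x\<bar> * beta_density a (1/2) (u / x))"
        using True by simp
      also have "\<dots> = ennreal \<bar>1/x\<bar> * ennreal (beta_density a (1/2) (u / x))"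
        by (rule ennreal_mult') simp
      finally show ?thesis .
    qed
    show "ennreal \<bar>1/x\<bar> * (ennreal (beta_prime_density (2*a) (2*b) x) * ennreal (beta_density a (1/2) (0 + 1/x * u))
          * ennreal (beta_density b (1/2) z) * indicator A (x * ((0 + 1/x * u) + 1 / z)))
        = ennreal (beta_prime_density (2*a) (2*b) x) * ennreal (beta_density a (1/2) (u / x) / x)
          * ennreal (beta_density b (1/2) z) * indicator A (u + x / z)"
      unfolding e0 e1 e2 by (simp only: mult_ac)
  qed
  finally show ?thesis .
next
  case False
  then show ?thesis by (simp add: beta_prime_density_zero)
qed

lemma step4:
  "(\<integral>\<^sup>+x. ennreal (beta_prime_density (2*a) (2*b) x) * ennreal (beta_density a (1/2) (u / x) / x)
          * ennreal (beta_density b (1/2) z) * indicator A (u + x / z) \<partial>lborel)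
 = (\<integral>\<^sup>+v. ennreal (beta_prime_density (2*a) (2*b) (z * v)) * ennreal (beta_density a (1/2) (u / (z * v)) / v)
          * ennreal (beta_density b (1/2) z) * indicator A (u + v) \<partial>lborel)"
proof (cases "z > 0")
  case True
  have "(\<integral>\<^sup>+x. ennreal (beta_prime_density (2*a) (2*b) x) * ennreal (beta_density a (1/2) (u / x) / x)
          * ennreal (beta_density b (1/2) z) * indicator A (u + x / z) \<partial>lborel)
      = ennreal \<bar>z\<bar> * (\<integral>\<^sup>+v. ennreal (beta_prime_density (2*a) (2*b) (0 + z * v)) * ennreal (beta_density a (1/2) (u / (0 + z * v)) / (0 + z * v))
          * ennreal (beta_density b (1/2) z) * indicator A (u + (0 + z * v) / z) \<partial>lborel)"
    using True by (intro nn_integral_real_affine) auto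
  also have "\<dots> = (\<integral>\<^sup>+v. ennreal z * (ennreal (beta_prime_density (2*a) (2*b) (0 + z * v)) * ennreal (beta_density a (1/2) (u / (0 + z * v)) / (0 + z * v))
          * ennreal (beta_density b (1/2) z) * indicator A (u + (0 + z * v) / z)) \<partial>lborel)"
    using True by (subst nn_integral_cmult[symmetric]) auto
  also have "\<dots> = (\<integral>\<^sup>+v. ennreal (beta_prime_density (2*a) (2*b) (z * v)) * ennreal (beta_density a (1/2) (u / (z * v)) / v)
          * ennreal (beta_density b (1/2) z) * indicator A (u + v) \<partial>lborel)"
  proof (intro nn_integral_cong)
    fix v :: real
    have e1: "(0 + z * v) / z = v" using True by simp
    have e2: "ennreal z * ennreal (beta_density a (1/2) (u / (0 + z * v)) / (0 + z * v))
            = ennreal (beta_density a (1/2) (u / (z * v)) / v)"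
    proof (cases "v > 0")
      case True
      with \<open>z > 0\<close> show ?thesis
        by (subst ennreal_mult''[symmetric]) (auto simp: beta_density_nonneg a)
    next
      case False
      have "beta_density a (1/2) (u / (z * v)) / v \<le> 0"
        using False a by (intro divide_nonneg_nonpos beta_density_nonneg) auto
      moreover have "beta_density a (1/2) (u / (z * v)) / (z * v) \<le> 0"
        using False a \<open>z > 0\<close> by (intro divide_nonneg_nonpos beta_density_nonneg) (auto simp: mult_nonneg_nonpos)
      ultimately show ?thesis by (simp add: ennreal_neg)
    qed
    show "ennreal z * (ennreal (beta_prime_density (2*a) (2*b) (0 + z * v)) * ennreal (beta_density a (1/2) (u / (0 + z * v)) / (0 + z * v))
          * ennreal (beta_density b (1/2) z) * indicator A (u + (0 + z * v) / z))
        = ennreal (beta_prime_density (2*a) (2*b) (z * v)) * ennreal (beta_density a (1/2) (u / (z * v)) / v)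
          * ennreal (beta_density b (1/2) z) * indicator A (u + v)"
      unfolding e1 e2[symmetric] by (simp add: mult_ac)
  qed
  finally show ?thesis .
next
  case False
  then show ?thesis by (simp add: beta_density_zero)
qed

lemma step6:
  "(\<integral>\<^sup>+z. ennreal (beta_prime_density (2*a) (2*b) (z * v)) * ennreal (beta_density a (1/2) (u / (z * v)) / v)
          * ennreal (beta_density b (1/2) z) * indicator A (u + v) \<partial>lborel)
  = ennreal (if 0 < u \<and> u < v then 2 * beta_prime_density a b u * beta_prime_density a b v else 0) * indicator A (u + v)"
proof -
  have pt: "ennreal (beta_prime_density (2*a) (2*b) (z * v)) * ennreal (beta_density a (1/2) (u / (z * v)) / v)
          * ennreal (beta_density b (1/2) z) = ennreal (kf a b u v z)" for z
  proof (cases "v > 0")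
    case True
    then show ?thesis unfolding kf_def using a b
      by (simp add: ennreal_mult''[symmetric] beta_density_nonneg beta_prime_density_nonneg mult_ac)
  next
    case False
    have "kf a b u v z = 0" using False by (intro kf_zero) auto
    moreover have "beta_density a (1/2) (u / (z * v)) / v \<le> 0"
      using False a by (intro divide_nonneg_nonpos beta_density_nonneg) auto
    ultimately show ?thesis by (simp add: ennreal_neg)
  qed
  have "(\<integral>\<^sup>+z. ennreal (beta_prime_density (2*a) (2*b) (z * v)) * ennreal (beta_density a (1/2) (u / (z * v)) / v)
          * ennreal (beta_density b (1/2) z) * indicator A (u + v) \<partial>lborel)
      = (\<integral>\<^sup>+z. ennreal (kf a b u v z) * indicator A (u + v) \<partial>lborel)"
    by (simp only: pt)
  also have "\<dots> = (\<integral>\<^sup>+z. ennreal (kf a b u v z) \<partial>lborel) * indicator A (u + v)"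
    by (rule nn_integral_multc) measurable
  also have "\<dots> = ennreal (if 0 < u \<and> u < v then 2 * beta_prime_density a b u * beta_prime_density a b v else 0) * indicator A (u + v)"
    by (simp only: kernel_nn[OF a b ab])
  finally show ?thesis .
qed

end


context
  fixes a b :: real and A :: "real set"
  assumes a: "a > 0" and b: "b > 0" and ab: "a + b = 1/2" and A[measurable]: "A \<in> sets borel"
begin

lemma rhs_chain:
  "(\<integral>\<^sup>+x. \<integral>\<^sup>+y. \<integral>\<^sup>+z. ennreal (beta_prime_density (2*a) (2*b) x) * ennreal (beta_density a (1/2) y)
          * ennreal (beta_density b (1/2) z) * indicator A (x * (y + 1 / z)) \<partial>lborel \<partial>lborel \<partial>lborel)
   = (\<integral>\<^sup>+u. \<integral>\<^sup>+v. ennreal (if 0 < u \<and> u < v then 2 * beta_prime_density a b u * beta_prime_density a b v else 0)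
          * indicator A (u + v) \<partial>lborel \<partial>lborel)"
proof -
  have "(\<integral>\<^sup>+x. \<integral>\<^sup>+y. \<integral>\<^sup>+z. ennreal (beta_prime_density (2*a) (2*b) x) * ennreal (beta_density a (1/2) y)
          * ennreal (beta_density b (1/2) z) * indicator A (x * (y + 1 / z)) \<partial>lborel \<partial>lborel \<partial>lborel)
      = (\<integral>\<^sup>+x. \<integral>\<^sup>+z. \<integral>\<^sup>+y. ennreal (beta_prime_density (2*a) (2*b) x) * ennreal (beta_density a (1/2) y)
          * ennreal (beta_density b (1/2) z) * indicator A (x * (y + 1 / z)) \<partial>lborel \<partial>lborel \<partial>lborel)"
    by (intro nn_integral_cong swap2) measurable
  also have "\<dots> = (\<integral>\<^sup>+x. \<integral>\<^sup>+z. \<integral>\<^sup>+u. ennreal (beta_prime_density (2*a) (2*b) x) * ennreal (beta_density a (1/2) (u / x) / x)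
          * ennreal (beta_density b (1/2) z) * indicator A (u + x / z) \<partial>lborel \<partial>lborel \<partial>lborel)"
    by (simp only: step2[OF a b ab A])
  also have "\<dots> = (\<integral>\<^sup>+z. \<integral>\<^sup>+x. \<integral>\<^sup>+u. ennreal (beta_prime_density (2*a) (2*b) x) * ennreal (beta_density a (1/2) (u / x) / x)
          * ennreal (beta_density b (1/2) z) * indicator A (u + x / z) \<partial>lborel \<partial>lborel \<partial>lborel)"
    by (rule swap2) measurable
  also have "\<dots> = (\<integral>\<^sup>+z. \<integral>\<^sup>+u. \<integral>\<^sup>+x. ennreal (beta_prime_density (2*a) (2*b) x) * ennreal (beta_density a (1/2) (u / x) / x)
          * ennreal (beta_density b (1/2) z) * indicator A (u + x / z) \<partial>lborel \<partial>lborel \<partial>lborel)"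
    by (intro nn_integral_cong swap2) measurable
  also have "\<dots> = (\<integral>\<^sup>+z. \<integral>\<^sup>+u. \<integral>\<^sup>+v. ennreal (beta_prime_density (2*a) (2*b) (z * v)) * ennreal (beta_density a (1/2) (u / (z * v)) / v)
          * ennreal (beta_density b (1/2) z) * indicator A (u + v) \<partial>lborel \<partial>lborel \<partial>lborel)"
    by (simp only: step4[OF a b ab A])
  also have "\<dots> = (\<integral>\<^sup>+u. \<integral>\<^sup>+z. \<integral>\<^sup>+v. ennreal (beta_prime_density (2*a) (2*b) (z * v)) * ennreal (beta_density a (1/2) (u / (z * v)) / v)
          * ennreal (beta_density b (1/2) z) * indicator A (u + v) \<partial>lborel \<partial>lborel \<partial>lborel)"
    by (rule swap2) measurable
  also have "\<dots> = (\<integral>\<^sup>+u. \<integral>\<^sup>+v. \<integral>\<^sup>+z. ennreal (beta_prime_density (2*a) (2*b) (z * v)) * ennreal (beta_density a (1/2) (u / (z * v)) / v)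
          * ennreal (beta_density b (1/2) z) * indicator A (u + v) \<partial>lborel \<partial>lborel \<partial>lborel)"
    by (intro nn_integral_cong swap2) measurable
  also have "\<dots> = (\<integral>\<^sup>+u. \<integral>\<^sup>+v. ennreal (if 0 < u \<and> u < v then 2 * beta_prime_density a b u * beta_prime_density a b v else 0)
          * indicator A (u + v) \<partial>lborel \<partial>lborel)"
    by (simp only: step6[OF a b ab A])
  finally show ?thesis .
qed

lemma symmetrize:
  "(\<integral>\<^sup>+u. \<integral>\<^sup>+v. ennreal (beta_prime_density a b u) * ennreal (beta_prime_density a b v)
          * indicator A (u + v) \<partial>lborel \<partial>lborel)
   = (\<integral>\<^sup>+u. \<integral>\<^sup>+v. ennreal (if 0 < u \<and> u < v then 2 * beta_prime_density a b u * beta_prime_density a b v else 0)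
          * indicator A (u + v) \<partial>lborel \<partial>lborel)"
proof -
  define S where "S = (\<lambda>u v. if u < v then ennreal (beta_prime_density a b u) * ennreal (beta_prime_density a b v)
          * indicator A (u + v) else (0::ennreal))"
  have Sm[measurable]: "case_prod S \<in> borel_measurable (lborel \<Otimes>\<^sub>M lborel)"
    unfolding S_def by measurable
  have Sm1[measurable]: "S u \<in> borel_measurable lborel" for u
    unfolding S_def by measurable
  have Sm2[measurable]: "(\<lambda>v. S v u) \<in> borel_measurable lborel" for u
    unfolding S_def by measurable
  have p1: "(\<integral>\<^sup>+v. ennreal (beta_prime_density a b u) * ennreal (beta_prime_density a b v)
          * indicator A (u + v) \<partial>lborel) = (\<integral>\<^sup>+v. S u v + S v u \<partial>lborel)" for u
  proof (intro nn_integral_cong_AE)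
    show "AE v in lborel. ennreal (beta_prime_density a b u) * ennreal (beta_prime_density a b v)
          * indicator A (u + v) = S u v + S v u"
      using AE_lborel_singleton[of u]
      by eventually_elim (auto simp: S_def add.commute mult.commute)
  qed
  have "(\<integral>\<^sup>+u. \<integral>\<^sup>+v. ennreal (beta_prime_density a b u) * ennreal (beta_prime_density a b v)
          * indicator A (u + v) \<partial>lborel \<partial>lborel)
      = (\<integral>\<^sup>+u. (\<integral>\<^sup>+v. S u v \<partial>lborel) + (\<integral>\<^sup>+v. S v u \<partial>lborel) \<partial>lborel)"
    by (simp only: p1, intro nn_integral_cong nn_integral_add) (auto intro: Sm1 Sm2)
  also have "\<dots> = (\<integral>\<^sup>+u. \<integral>\<^sup>+v. S u v \<partial>lborel \<partial>lborel) + (\<integral>\<^sup>+u. \<integral>\<^sup>+v. S v u \<partial>lborel \<partial>lborel)"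
    by (rule nn_integral_add) measurable
  also have "(\<integral>\<^sup>+u. \<integral>\<^sup>+v. S v u \<partial>lborel \<partial>lborel) = (\<integral>\<^sup>+u. \<integral>\<^sup>+v. S u v \<partial>lborel \<partial>lborel)"
    by (rule swap2) measurable
  also have "(\<integral>\<^sup>+u. \<integral>\<^sup>+v. S u v \<partial>lborel \<partial>lborel) + (\<integral>\<^sup>+u. \<integral>\<^sup>+v. S u v \<partial>lborel \<partial>lborel)
      = 2 * (\<integral>\<^sup>+u. \<integral>\<^sup>+v. S u v \<partial>lborel \<partial>lborel)"
    by (simp add: mult_2)
  also have "\<dots> = (\<integral>\<^sup>+u. \<integral>\<^sup>+v. 2 * S u v \<partial>lborel \<partial>lborel)"
    by (subst nn_integral_cmult[symmetric], measurable, intro nn_integral_cong,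
        subst nn_integral_cmult[symmetric], measurable)
  also have "\<dots> = (\<integral>\<^sup>+u. \<integral>\<^sup>+v. ennreal (if 0 < u \<and> u < v then 2 * beta_prime_density a b u * beta_prime_density a b v else 0)
          * indicator A (u + v) \<partial>lborel \<partial>lborel)"
  proof (intro nn_integral_cong)
    fix u v :: real
    show "2 * S u v = ennreal (if 0 < u \<and> u < v then 2 * beta_prime_density a b u * beta_prime_density a b v else 0)
          * indicator A (u + v)"
    proof (cases "u < v")
      case True
      show ?thesis
      proof (cases "0 < u")
        case True
        have "ennreal (2 * beta_prime_density a b u * beta_prime_density a b v)
            = 2 * ennreal (beta_prime_density a b u) * ennreal (beta_prime_density a b v)"
          using a b by (simp add: ennreal_mult beta_prime_density_nonneg)
        with True \<open>u < v\<close> show ?thesis unfolding S_def by (simp add: mult.assoc)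
      next
        case False
        then show ?thesis using \<open>u < v\<close> unfolding S_def by (simp add: beta_prime_density_zero)
      qed
    next
      case False
      then show ?thesis unfolding S_def by simp
    qed
  qed
  finally show ?thesis .
qed

end

theorem proposition6:
  fixes a b :: real
  assumes "a > 0" and "b > 0" and "a + b = 1 / 2"
  shows "distr (beta_prime_measure a b \<Otimes>\<^sub>M beta_prime_measure a b) borel
            (\<lambda>(x, y). x + y)
       = distr (beta_prime_measure (2 * a) (2 * b) \<Otimes>\<^sub>M
                  (beta_measure a (1 / 2) \<Otimes>\<^sub>M beta_measure b (1 / 2))) borel
            (\<lambda>(x, y, z). x * (y + 1 / z))"
proof (rule measure_eqI)
  show "sets (distr (beta_prime_measure a b \<Otimes>\<^sub>M beta_prime_measure a b) borel (\<lambda>(x, y). x + y))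
      = sets (distr (beta_prime_measure (2 * a) (2 * b) \<Otimes>\<^sub>M
                  (beta_measure a (1 / 2) \<Otimes>\<^sub>M beta_measure b (1 / 2))) borel
            (\<lambda>(x, y, z). x * (y + 1 / z)))" by simp
next
  fix A assume "A \<in> sets (distr (beta_prime_measure a b \<Otimes>\<^sub>M beta_prime_measure a b) borel (\<lambda>(x, y). x + y))"
  then have A: "A \<in> sets borel" by simp
  show "emeasure (distr (beta_prime_measure a b \<Otimes>\<^sub>M beta_prime_measure a b) borel (\<lambda>(x, y). x + y)) A
      = emeasure (distr (beta_prime_measure (2 * a) (2 * b) \<Otimes>\<^sub>M
                  (beta_measure a (1 / 2) \<Otimes>\<^sub>M beta_measure b (1 / 2))) borel
            (\<lambda>(x, y, z). x * (y + 1 / z))) A"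
    unfolding lhs_eq[OF A] rhs_eq[OF A] symmetrize[OF assms A] rhs_chain[OF assms A] ..
qed

end
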